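(* Let $T=(F_0,F_1,F_2)$ be a template of order $10$ and type $(4,4,2,2,2)$ (so rows $0$–$3$ and columns $0$–$3$ are relational, and each $F_i$ has exactly two ones in each row and column). Then: (i) every cell in $Q_2$ or $Q_3$ has type ${*}{*}000$; (ii) every cell in $Q_1$ has type $11001$, $11010$, $11100$ or $11111$, and each of these four types occurs exactly once in each row and exactly once in each column of $Q_1$; (iii) every cell in $Q_4$ has type $00001$, $00010$ or $00100$, and each of these three types occurs exactly twice in each row and exactly twice in each column of $Q_4$. Here ${*}$ denotes an arbitrary bit.
   Context: For $n$ even and even $\lambda_0,\dots,\lambda_{k-1}$, a template of order $n$ and type $(\lambda_0,\dots,\lambda_{k-1})$ is a list $(F_0,\dots,F_{k-3})$ of $n\times n$ arrays over $\{0,1\}$ such that $F_{t-2}$ has exactly $\lambda_t$ ones in each row and each column, the arrays are pairwise orthogonal (for arrays $F,F'$ with $\lambda,\mu$ ones per row/column, each pair $(a,b)\in\{0,1\}^2$ occurs in exactly $f_af'_b$ cells, where $f_1=\lambda,f_0=n-\lambda,f'_1=\mu,f'_0=n-\mu$), rows $0,\dots,\lambda_0-1$ and columns $0,\dots,\lambda_1-1$ are called relational, and every cell has weight congruent to $\chi=\frac12\sum_i\lambda_i$ modulo $2$. The type of cell $(i,j)$ is the binary string $xyF_0[i,j]\cdots F_{k-3}[i,j]$ where $x=1$ iff row $i$ is relational and $y=1$ iff column $j$ is relational; its weight is its number of ones. (For type $(4,4,2,2,2)$, $\chi=7$, so all cells have odd weight.) Quadrants for order $10$ with $\lambda_0=\lambda_1=4$: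 $Q_1$ = rows $0$–$3$ × columns $0$–$3$; $Q_2$ = rows $0$–$3$ × columns $4$–$9$; $Q_3$ = rows $4$–$9$ × columns $0$–$3$; $Q_4$ = rows $4$–$9$ × columns $4$–$9$. *)

theory Defs
  imports Main
begin

definition is01 :: "nat \<Rightarrow> (nat \<Rightarrow> nat \<Rightarrow> nat) \<Rightarrow> bool" where
  "is01 n A \<longleftrightarrow> (\<forall>i<n. \<forall>j<n. A i j \<in> {0,1})"

definition regular :: "nat \<Rightarrow> (nat \<Rightarrow> nat \<Rightarrow> nat) \<Rightarrow> nat \<Rightarrow> bool" where
  "regular n A lam \<longleftrightarrow>
     (\<forall>i<n. card {j. j < n \<and> A i j = 1} = lam) \<and>
     (\<forall>j<n. card {i. i < n \<and> A i j = 1} = lam)"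

definition fcount :: "nat \<Rightarrow> nat \<Rightarrow> nat \<Rightarrow> nat" where
  "fcount n lam a = (if a = 1 then lam else n - lam)"

definition orthogonal ::
  "nat \<Rightarrow> (nat \<Rightarrow> nat \<Rightarrow> nat) \<Rightarrow> nat \<Rightarrow> (nat \<Rightarrow> nat \<Rightarrow> nat) \<Rightarrow> nat \<Rightarrow> bool" where
  "orthogonal n A lam B mu \<longleftrightarrow>
     (\<forall>a\<in>{0,1}. \<forall>b\<in>{0,1}.
        card {(i,j). i < n \<and> j < n \<and> A i j = a \<and> B i j = b} = fcount n lam a * fcount n mu b)"

text \<open>Type of cell (i,j): the binary string x y F_0[i,j] ... F_{k-3}[i,j].\<close>
definition cell_type :: "nat list \<Rightarrow> (nat \<Rightarrow> nat \<Rightarrow> nat) list \<Rightarrow> nat \<Rightarrow> nat \<Rightarrow> nat list" where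
  "cell_type lam F i j =
     [if i < lam ! 0 then 1 else 0, if j < lam ! 1 then 1 else 0] @ map (\<lambda>A. A i j) F"

definition weight :: "nat list \<Rightarrow> nat" where
  "weight t = sum_list t"

definition template :: "nat \<Rightarrow> nat list \<Rightarrow> (nat \<Rightarrow> nat \<Rightarrow> nat) list \<Rightarrow> bool" where
  "template n lam F \<longleftrightarrow>
     even n \<and> length lam \<ge> 2 \<and> (\<forall>l\<in>set lam. even l) \<and>
     length F = length lam - 2 \<and>
     (\<forall>t < length F. is01 n (F ! t) \<and> regular n (F ! t) (lam ! (t + 2))) \<and>
     (\<forall>s < length F. \<forall>t < length F. s \<noteq> t \<longrightarrow>
         orthogonal n (F ! s) (lam ! (s + 2)) (F ! t) (lam ! (t + 2))) \<and>
     (\<forall>i<n. \<forall>j<n. weight (cell_type lam F i j) mod 2 = (sum_list lam div 2) mod 2)"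

end

theory Submission
  imports Defs
begin

lemma card_sum01: assumes "\<forall>k<n. (a::nat\<Rightarrow>nat) k \<in> {0,1}"
  shows "card {k. k<n \<and> a k = 1} = (\<Sum>k<n. a k)"
proof -
  have "card {k. k<n \<and> a k = 1} = card {k\<in>{..<n}. a k = 1}" by (rule arg_cong[where f=card]) auto
  also have "\<dots> = (\<Sum>k\<in>{k\<in>{..<n}. a k = 1}. 1)" by simp
  also have "\<dots> = (\<Sum>k<n. if a k = 1 then 1 else 0)" by (subst sum.inter_filter) auto
  also have "\<dots> = (\<Sum>k<n. a k)" by (rule sum.cong) (use assms in auto)
  finally show ?thesis .
qed

lemma "(\<Sum>k<10. (a::nat\<Rightarrow>nat) k) = a 0 + a 1 + a 2 + a 3 + a 4 + a 5 + a 6 + a 7 + a 8 + a 9"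
  by (simp add: eval_nat_numeral)

lemma card_if: "card {k. k<(n::nat) \<and> P k} = (\<Sum>k<n. if P k then 1 else 0)"
proof -
  have "card {k. k<n \<and> P k} = card {k\<in>{..<n}. P k}" by (rule arg_cong[where f=card]) auto
  also have "\<dots> = (\<Sum>k\<in>{k\<in>{..<n}. P k}. 1)" by simp
  also have "\<dots> = (\<Sum>k<n. if P k then 1 else 0)" by (rule sum.inter_filter) simp
  finally show ?thesis .
qed

lemma q1:
  fixes a b c :: "nat \<Rightarrow> nat"
  assumes "\<forall>k<4. (a k, b k, c k) \<in> {(0,0,1),(0,1,0),(1,0,0),(1,1,1)}"
   and "(\<Sum>k<4. a k) = 2" "(\<Sum>k<4. b k) = 2" "(\<Sum>k<4. c k) = 2"
  shows "\<forall>\<tau>\<in>{[1,1,0,0,1], [1,1,0,1,0], [1,1,1,0,0], [1,1,1,1,1]}.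
           card {k. k<4 \<and> [1,1,a k, b k, c k] = \<tau>} = 1"
proof -
  define p where "p k = (if [1,1,a k, b k, c k] = [1,1,1,0,0] then 1 else (0::nat))" for k
  define q where "q k = (if [1,1,a k, b k, c k] = [1,1,0,1,0] then 1 else (0::nat))" for k
  define r where "r k = (if [1,1,a k, b k, c k] = [1,1,0,0,1] then 1 else (0::nat))" for k
  define t where "t k = (if [1,1,a k, b k, c k] = [1,1,1,1,1] then 1 else (0::nat))" for k
  have C: "a k = p k + t k \<and> b k = q k + t k \<and> c k = r k + t k \<and> p k + q k + r k + t k = 1" if "k<4" for k
    using assms(1) that unfolding p_def q_def r_def t_def by auto
  have C0: "a 0 = p 0 + t 0" "b 0 = q 0 + t 0" "c 0 = r 0 + t 0" "p 0 + q 0 + r 0 + t 0 = 1"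
    using C[of 0] by auto
  have C1: "a 1 = p 1 + t 1" "b 1 = q 1 + t 1" "c 1 = r 1 + t 1" "p 1 + q 1 + r 1 + t 1 = 1"
    using C[of 1] by auto
  have C2: "a 2 = p 2 + t 2" "b 2 = q 2 + t 2" "c 2 = r 2 + t 2" "p 2 + q 2 + r 2 + t 2 = 1"
    using C[of 2] by auto
  have C3: "a 3 = p 3 + t 3" "b 3 = q 3 + t 3" "c 3 = r 3 + t 3" "p 3 + q 3 + r 3 + t 3 = 1"
    using C[of 3] by auto
  have s: "a 0 + a 1 + a 2 + a 3 = 2" "b 0 + b 1 + b 2 + b 3 = 2" "c 0 + c 1 + c 2 + c 3 = 2"
    using assms(2-4) by (simp_all add: eval_nat_numeral)
  have T: "t 0 + t 1 + t 2 + t 3 = 1" using C0 C1 C2 C3 s by linarith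
  have P: "p 0 + p 1 + p 2 + p 3 = 1" using C0 C1 C2 C3 s T by linarith
  have Q: "q 0 + q 1 + q 2 + q 3 = 1" using C0 C1 C2 C3 s T by linarith
  have R: "r 0 + r 1 + r 2 + r 3 = 1" using C0 C1 C2 C3 s T by linarith
  have e: "card {k. k<4 \<and> P k} = (if P 0 then 1 else 0) + (if P 1 then 1 else 0) + (if P 2 then 1 else 0) + (if P 3 then (1::nat) else 0)" for P :: "nat \<Rightarrow> bool"
    unfolding card_if by (simp add: eval_nat_numeral)
  show ?thesis using P Q R T unfolding e p_def q_def r_def t_def by simp
qed


lemma line:
  fixes a b c :: "nat \<Rightarrow> nat"
  assumes 01: "\<forall>k<10. a k \<in> {0,1} \<and> b k \<in> {0,1} \<and> c k \<in> {0,1}"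
   and ca: "card {k. k<10 \<and> a k = 1} = 2" and cb: "card {k. k<10 \<and> b k = 1} = 2"
   and cc: "card {k. k<10 \<and> c k = 1} = 2"
   and ev: "\<forall>k<4. even (a k + b k + c k)" and od: "\<forall>k. 4\<le>k \<and> k<10 \<longrightarrow> odd (a k + b k + c k)"
  shows "(\<forall>k<4. a k = 0 \<and> b k = 0 \<and> c k = 0) \<and> (\<forall>k. 4\<le>k \<and> k<10 \<longrightarrow> a k + b k + c k = 1)"
proof -
  have sa: "(\<Sum>k<10. a k) = 2" using ca card_sum01[of 10 a] 01 by simp
  have sb: "(\<Sum>k<10. b k) = 2" using cb card_sum01[of 10 b] 01 by simp
  have sc: "(\<Sum>k<10. c k) = 2" using cc card_sum01[of 10 c] 01 by simp
  have g: "a k + b k + c k \<ge> 1" if "4\<le>k" "k<10" for k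
  proof -
    have "odd (a k + b k + c k)" using od that by blast
    then show ?thesis by (cases "a k + b k + c k") auto
  qed
  have g4: "a 4 + b 4 + c 4 \<ge> 1" and g5: "a 5 + b 5 + c 5 \<ge> 1" and g6: "a 6 + b 6 + c 6 \<ge> 1"
    and g7: "a 7 + b 7 + c 7 \<ge> 1" and g8: "a 8 + b 8 + c 8 \<ge> 1" and g9: "a 9 + b 9 + c 9 \<ge> 1"
    using g by auto
  have tot: "a 0 + a 1 + a 2 + a 3 + a 4 + a 5 + a 6 + a 7 + a 8 + a 9
     + (b 0 + b 1 + b 2 + b 3 + b 4 + b 5 + b 6 + b 7 + b 8 + b 9)
     + (c 0 + c 1 + c 2 + c 3 + c 4 + c 5 + c 6 + c 7 + c 8 + c 9) = 6"
    using sa sb sc by (simp add: eval_nat_numeral)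
  have z: "a 0 + a 1 + a 2 + a 3 + b 0 + b 1 + b 2 + b 3 + c 0 + c 1 + c 2 + c 3 = 0"
    using tot g4 g5 g6 g7 g8 g9 by linarith
  have o4: "a 4 + b 4 + c 4 = 1" using tot g4 g5 g6 g7 g8 g9 by linarith
  have o5: "a 5 + b 5 + c 5 = 1" using tot g4 g5 g6 g7 g8 g9 by linarith
  have o6: "a 6 + b 6 + c 6 = 1" using tot g4 g5 g6 g7 g8 g9 by linarith
  have o7: "a 7 + b 7 + c 7 = 1" using tot g4 g5 g6 g7 g8 g9 by linarith
  have o8: "a 8 + b 8 + c 8 = 1" using tot g4 g5 g6 g7 g8 g9 by linarith
  have o9: "a 9 + b 9 + c 9 = 1" using tot g4 g5 g6 g7 g8 g9 by linarith
  have A: "\<forall>k<4. a k = 0 \<and> b k = 0 \<and> c k = 0"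
  proof (intro allI impI)
    fix k :: nat assume "k<4"
    then have "k = 0 \<or> k = 1 \<or> k = 2 \<or> k = 3" by auto
    then show "a k = 0 \<and> b k = 0 \<and> c k = 0" using z by auto
  qed
  have B: "\<forall>k. 4\<le>k \<and> k<10 \<longrightarrow> a k + b k + c k = 1"
  proof (intro allI impI)
    fix k :: nat assume "4\<le>k \<and> k<10"
    then have "k = 4 \<or> k = 5 \<or> k = 6 \<or> k = 7 \<or> k = 8 \<or> k = 9" by auto
    then show "a k + b k + c k = 1" using o4 o5 o6 o7 o8 o9 by auto
  qed
  show ?thesis using A B by blast
qed


lemma q4:
  fixes a b c :: "nat \<Rightarrow> nat"
  assumes s1: "\<forall>k. 4\<le>k \<and> k<10 \<longrightarrow> a k + b k + c k = 1"
   and ca: "card {k. 4\<le>k \<and> k<10 \<and> a k = 1} = 2" and cb: "card {k. 4\<le>k \<and> k<10 \<and> b k = 1} = 2"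
   and cc: "card {k. 4\<le>k \<and> k<10 \<and> c k = 1} = 2"
  shows "\<forall>\<tau>\<in>{[0,0,0,0,1], [0,0,0,1,0], [0,0,1,0,0]}.
           card {k. 4\<le>k \<and> k<10 \<and> [0,0,a k, b k, c k] = \<tau>} = 2"
proof -
  have "{k. 4\<le>k \<and> k<10 \<and> [0,0,a k, b k, c k] = [0,0,1,0,0]} = {k. 4\<le>k \<and> k<10 \<and> a k = 1}"
    using s1 by force
  moreover have "{k. 4\<le>k \<and> k<10 \<and> [0,0,a k, b k, c k] = [0,0,0,1,0]} = {k. 4\<le>k \<and> k<10 \<and> b k = 1}"
    using s1 by force
  moreover have "{k. 4\<le>k \<and> k<10 \<and> [0,0,a k, b k, c k] = [0,0,0,0,1]} = {k. 4\<le>k \<and> k<10 \<and> c k = 1}"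
    using s1 by force
  ultimately show ?thesis using ca cb cc by auto
qed

theorem mainTheorem9:
  fixes F :: "(nat \<Rightarrow> nat \<Rightarrow> nat) list"
  assumes "template 10 [4,4,2,2,2] F"
  shows
   "(\<forall>i<10. \<forall>j<10. ((i < 4 \<and> 4 \<le> j) \<or> (4 \<le> i \<and> j < 4)) \<longrightarrow>
        drop 2 (cell_type [4,4,2,2,2] F i j) = [0,0,0])
    \<and>
    (\<forall>i<4. \<forall>j<4. cell_type [4,4,2,2,2] F i j \<in>
        {[1,1,0,0,1], [1,1,0,1,0], [1,1,1,0,0], [1,1,1,1,1]})
    \<and>
    (\<forall>\<tau>\<in>{[1,1,0,0,1], [1,1,0,1,0], [1,1,1,0,0], [1,1,1,1,1]}.
        (\<forall>i<4. card {j. j < 4 \<and> cell_type [4,4,2,2,2] F i j = \<tau>} = 1) \<and>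
        (\<forall>j<4. card {i. i < 4 \<and> cell_type [4,4,2,2,2] F i j = \<tau>} = 1))
    \<and>
    (\<forall>i\<in>{4..<10}. \<forall>j\<in>{4..<10}. cell_type [4,4,2,2,2] F i j \<in>
        {[0,0,0,0,1], [0,0,0,1,0], [0,0,1,0,0]})
    \<and>
    (\<forall>\<tau>\<in>{[0,0,0,0,1], [0,0,0,1,0], [0,0,1,0,0]}.
        (\<forall>i\<in>{4..<10}. card {j. 4 \<le> j \<and> j < 10 \<and> cell_type [4,4,2,2,2] F i j = \<tau>} = 2) \<and>
        (\<forall>j\<in>{4..<10}. card {i. 4 \<le> i \<and> i < 10 \<and> cell_type [4,4,2,2,2] F i j = \<tau>} = 2))"
proof -
  let ?L = "[4,4,2,2,2] :: nat list"
  have T: "template 10 ?L F" by fact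
  have lF0: "length F = length ?L - 2" using T unfolding template_def by blast
  have lF: "length F = 3" using lF0 by simp
  then obtain A B C where F: "F = [A,B,C]"
    by (auto simp: numeral_3_eq_3 length_Suc_conv)
  have reg0: "\<forall>t < length F. is01 10 (F ! t) \<and> regular 10 (F ! t) (?L ! (t + 2))"
    using T unfolding template_def by blast
  have reg: "\<forall>t<3. is01 10 (F ! t) \<and> regular 10 (F ! t) (?L ! (t + 2))"
    using reg0 lF by simp
  have rA: "is01 10 A" "regular 10 A 2" using reg[rule_format, of 0] F by auto
  have rB: "is01 10 B" "regular 10 B 2" using reg[rule_format, of 1] F by auto
  have rC: "is01 10 C" "regular 10 C 2" using reg[rule_format, of 2] F by (auto simp: numeral_2_eq_2)
  have ct: "cell_type ?L [A,B,C] i j = [if i<4 then 1 else 0, if j<4 then 1 else 0, A i j, B i j, C i j]"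
    for i j by (simp add: cell_type_def)
  have par0: "\<forall>i<10. \<forall>j<10. weight (cell_type ?L F i j) mod 2 = (sum_list ?L div 2) mod 2"
    using T unfolding template_def by blast
  have par: "odd ((if i<4 then 1 else 0) + (if j<4 then 1 else (0::nat)) + A i j + B i j + C i j)"
    if "i<10" "j<10" for i j
  proof -
    have w1: "weight (cell_type ?L [A,B,C] i j) mod 2 = 1" using par0 that F by simp
    have w2: "weight (cell_type ?L [A,B,C] i j) =
       (if i<4 then 1 else 0) + (if j<4 then 1 else (0::nat)) + A i j + B i j + C i j"
      unfolding ct weight_def by (simp add: add.assoc)
    show ?thesis using w1 w2 by (metis odd_iff_mod_2_eq_one)
  qed
  have v01: "A i j \<in> {0,1} \<and> B i j \<in> {0,1} \<and> C i j \<in> {0,1}" if "i<10" "j<10" for i j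
    using rA(1) rB(1) rC(1) that unfolding is01_def by blast
  have rowc: "card {j. j<10 \<and> A i j = 1} = 2 \<and> card {j. j<10 \<and> B i j = 1} = 2 \<and> card {j. j<10 \<and> C i j = 1} = 2"
    if "i<10" for i using rA(2) rB(2) rC(2) that unfolding regular_def by blast
  have colc: "card {i. i<10 \<and> A i j = 1} = 2 \<and> card {i. i<10 \<and> B i j = 1} = 2 \<and> card {i. i<10 \<and> C i j = 1} = 2"
    if "j<10" for j using rA(2) rB(2) rC(2) that unfolding regular_def by blast
  have R: "(\<forall>k<4. A i k = 0 \<and> B i k = 0 \<and> C i k = 0) \<and> (\<forall>k. 4\<le>k \<and> k<10 \<longrightarrow> A i k + B i k + C i k = 1)"
    if "4 \<le> i" "i<10" for i
  proof (rule line)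
    show "\<forall>k<10. A i k \<in> {0,1} \<and> B i k \<in> {0,1} \<and> C i k \<in> {0,1}" using v01 that by auto
    show "card {k. k<10 \<and> A i k = 1} = 2" "card {k. k<10 \<and> B i k = 1} = 2" "card {k. k<10 \<and> C i k = 1} = 2"
      using rowc that by auto
    show "\<forall>k<4. even (A i k + B i k + C i k)"
    proof (intro allI impI)
      fix k :: nat assume k: "k<4"
      have "odd ((if i<4 then 1 else 0) + (if k<4 then 1 else (0::nat)) + (A i k + B i k + C i k))"
        using par[of i k] that k by (simp add: add.assoc)
      then show "even (A i k + B i k + C i k)" using that k by simp
    qed
    show "\<forall>k. 4\<le>k \<and> k<10 \<longrightarrow> odd (A i k + B i k + C i k)"
    proof (intro allI impI)
      fix k :: nat assume k: "4\<le>k \<and> k<10"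
      have "odd ((if i<4 then 1 else 0) + (if k<4 then 1 else (0::nat)) + (A i k + B i k + C i k))"
        using par[of i k] that k by (simp add: add.assoc)
      then show "odd (A i k + B i k + C i k)" using that k by simp
    qed
  qed
  have Cl: "(\<forall>k<4. A k j = 0 \<and> B k j = 0 \<and> C k j = 0) \<and> (\<forall>k. 4\<le>k \<and> k<10 \<longrightarrow> A k j + B k j + C k j = 1)"
    if "4 \<le> j" "j<10" for j
  proof (rule line)
    show "\<forall>k<10. A k j \<in> {0,1} \<and> B k j \<in> {0,1} \<and> C k j \<in> {0,1}" using v01 that by auto
    show "card {k. k<10 \<and> A k j = 1} = 2" "card {k. k<10 \<and> B k j = 1} = 2" "card {k. k<10 \<and> C k j = 1} = 2"
      using colc that by auto
    show "\<forall>k<4. even (A k j + B k j + C k j)"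
    proof (intro allI impI)
      fix k :: nat assume k: "k<4"
      have "odd ((if k<4 then 1 else 0) + (if j<4 then 1 else (0::nat)) + (A k j + B k j + C k j))"
        using par[of k j] that k by (simp add: add.assoc)
      then show "even (A k j + B k j + C k j)" using that k by simp
    qed
    show "\<forall>k. 4\<le>k \<and> k<10 \<longrightarrow> odd (A k j + B k j + C k j)"
    proof (intro allI impI)
      fix k :: nat assume k: "4\<le>k \<and> k<10"
      have "odd ((if k<4 then 1 else 0) + (if j<4 then 1 else (0::nat)) + (A k j + B k j + C k j))"
        using par[of k j] that k by (simp add: add.assoc)
      then show "odd (A k j + B k j + C k j)" using that k by simp
    qed
  qed
  have Z3: "A i j = 0 \<and> B i j = 0 \<and> C i j = 0" if "4 \<le> i" "i<10" "j<4" for i j using R that by blast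
  have Z2: "A i j = 0 \<and> B i j = 0 \<and> C i j = 0" if "i<4" "4 \<le> j" "j<10" for i j using Cl that by blast
  have S4: "A i j + B i j + C i j = 1" if "4 \<le> i" "i<10" "4 \<le> j" "j<10" for i j using R that by blast
  have trip: "(A i j, B i j, C i j) \<in> {(0,0,1),(0,1,0),(1,0,0),(1,1,1)}" if "i<4" "j<4" for i j
  proof -
    have o: "odd (2 + (A i j + B i j + C i j))" using par[of i j] that by (simp add: add.assoc)
    have "A i j = 0 \<or> A i j = 1" "B i j = 0 \<or> B i j = 1" "C i j = 0 \<or> C i j = 1" using v01[of i j] that by auto
    then show ?thesis using o by (elim disjE) simp_all
  qed
  have rs: "(\<Sum>k<4. A i k) = 2 \<and> (\<Sum>k<4. B i k) = 2 \<and> (\<Sum>k<4. C i k) = 2" if "i<4" for i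
  proof -
    have "(\<Sum>k<10. A i k) = 2 \<and> (\<Sum>k<10. B i k) = 2 \<and> (\<Sum>k<10. C i k) = 2"
      using rowc[of i] card_sum01[of 10 "A i"] card_sum01[of 10 "B i"] card_sum01[of 10 "C i"] v01[of i] that
      by auto
    moreover have "A i k = 0 \<and> B i k = 0 \<and> C i k = 0" if "k \<in> {4,5,6,7,8,9}" for k
      using Z2[of i k] \<open>i<4\<close> that by auto
    ultimately show ?thesis by (simp add: eval_nat_numeral)
  qed
  have cs: "(\<Sum>k<4. A k j) = 2 \<and> (\<Sum>k<4. B k j) = 2 \<and> (\<Sum>k<4. C k j) = 2" if "j<4" for j
  proof -
    have "(\<Sum>k<10. A k j) = 2 \<and> (\<Sum>k<10. B k j) = 2 \<and> (\<Sum>k<10. C k j) = 2"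
      using colc[of j] card_sum01[of 10 "\<lambda>k. A k j"] card_sum01[of 10 "\<lambda>k. B k j"]
        card_sum01[of 10 "\<lambda>k. C k j"] v01[of _ j] that
      by auto
    moreover have "A k j = 0 \<and> B k j = 0 \<and> C k j = 0" if "k \<in> {4,5,6,7,8,9}" for k
      using Z3[of k j] \<open>j<4\<close> that by auto
    ultimately show ?thesis by (simp add: eval_nat_numeral)
  qed
  have r4: "card {k. 4\<le>k \<and> k<10 \<and> A i k = 1} = 2 \<and> card {k. 4\<le>k \<and> k<10 \<and> B i k = 1} = 2
     \<and> card {k. 4\<le>k \<and> k<10 \<and> C i k = 1} = 2" if "4\<le>i" "i<10" for i
  proof -
    have "{k. 4\<le>k \<and> k<10 \<and> A i k = 1} = {k. k<10 \<and> A i k = 1}"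
         "{k. 4\<le>k \<and> k<10 \<and> B i k = 1} = {k. k<10 \<and> B i k = 1}"
         "{k. 4\<le>k \<and> k<10 \<and> C i k = 1} = {k. k<10 \<and> C i k = 1}"
    proof -
      have h: "\<not> k < 4" if "A i k = 1 \<or> B i k = 1 \<or> C i k = 1" for k
        using Z3[of i k] \<open>4\<le>i\<close> \<open>i<10\<close> that by auto
      show "{k. 4\<le>k \<and> k<10 \<and> A i k = 1} = {k. k<10 \<and> A i k = 1}"
         "{k. 4\<le>k \<and> k<10 \<and> B i k = 1} = {k. k<10 \<and> B i k = 1}"
         "{k. 4\<le>k \<and> k<10 \<and> C i k = 1} = {k. k<10 \<and> C i k = 1}"
        using h by (auto simp: not_less)
    qed
    then show ?thesis using rowc[of i] that by simp
  qed
  have c4: "card {k. 4\<le>k \<and> k<10 \<and> A k j = 1} = 2 \<and> card {k. 4\<le>k \<and> k<10 \<and> B k j = 1} = 2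
     \<and> card {k. 4\<le>k \<and> k<10 \<and> C k j = 1} = 2" if "4\<le>j" "j<10" for j
  proof -
    have "{k. 4\<le>k \<and> k<10 \<and> A k j = 1} = {k. k<10 \<and> A k j = 1}"
         "{k. 4\<le>k \<and> k<10 \<and> B k j = 1} = {k. k<10 \<and> B k j = 1}"
         "{k. 4\<le>k \<and> k<10 \<and> C k j = 1} = {k. k<10 \<and> C k j = 1}"
    proof -
      have h: "\<not> k < 4" if "A k j = 1 \<or> B k j = 1 \<or> C k j = 1" for k
        using Z2[of k j] \<open>4\<le>j\<close> \<open>j<10\<close> that by auto
      show "{k. 4\<le>k \<and> k<10 \<and> A k j = 1} = {k. k<10 \<and> A k j = 1}"
         "{k. 4\<le>k \<and> k<10 \<and> B k j = 1} = {k. k<10 \<and> B k j = 1}"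
         "{k. 4\<le>k \<and> k<10 \<and> C k j = 1} = {k. k<10 \<and> C k j = 1}"
        using h by (auto simp: not_less)
    qed
    then show ?thesis using colc[of j] that by simp
  qed
  have P1: "\<forall>i<10. \<forall>j<10. ((i < 4 \<and> 4 \<le> j) \<or> (4 \<le> i \<and> j < 4)) \<longrightarrow>
        drop 2 (cell_type ?L F i j) = [0,0,0]"
  proof (intro allI impI)
    fix i j :: nat assume ij: "i<10" "j<10" "(i < 4 \<and> 4 \<le> j) \<or> (4 \<le> i \<and> j < 4)"
    then have "A i j = 0 \<and> B i j = 0 \<and> C i j = 0"
    proof (elim disjE conjE)
      assume "i<4" "4\<le>j" then show ?thesis using Z2[of i j] ij by blast
    next
      assume "4\<le>i" "j<4" then show ?thesis using Z3[of i j] ij by blast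
    qed
    then show "drop 2 (cell_type ?L F i j) = [0,0,0]" unfolding F ct by simp
  qed
  have P2: "\<forall>i<4. \<forall>j<4. cell_type ?L F i j \<in>
        {[1,1,0,0,1], [1,1,0,1,0], [1,1,1,0,0], [1,1,1,1,1]}"
  proof (intro allI impI)
    fix i j :: nat assume ij: "i<4" "j<4"
    have "(A i j, B i j, C i j) \<in> {(0,0,1),(0,1,0),(1,0,0),(1,1,1)}" using trip ij by blast
    then show "cell_type ?L F i j \<in> {[1,1,0,0,1], [1,1,0,1,0], [1,1,1,0,0], [1,1,1,1,1]}"
      unfolding F ct using ij by auto
  qed
  have P3: "\<forall>\<tau>\<in>{[1,1,0,0,1], [1,1,0,1,0], [1,1,1,0,0], [1,1,1,1,1]}.
        (\<forall>i<4. card {j. j < 4 \<and> cell_type ?L F i j = \<tau>} = 1) \<and>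
        (\<forall>j<4. card {i. i < 4 \<and> cell_type ?L F i j = \<tau>} = 1)"
  proof (intro ballI conjI allI impI)
    fix \<tau> :: "nat list" and i :: nat assume \<tau>: "\<tau> \<in> {[1,1,0,0,1], [1,1,0,1,0], [1,1,1,0,0], [1,1,1,1,1]}" and i: "i<4"
    have seq: "{j. j < 4 \<and> cell_type ?L F i j = \<tau>} = {j. j<4 \<and> [1,1,A i j, B i j, C i j] = \<tau>}"
      using i unfolding F ct by auto
    then show "card {j. j < 4 \<and> cell_type ?L F i j = \<tau>} = 1"
    proof -
      have hq: "\<forall>k<4. (A i k, B i k, C i k) \<in> {(0,0,1),(0,1,0),(1,0,0),(1,1,1)}" using trip i by blast
      have Q: "\<forall>\<tau>\<in>{[1,1,0,0,1], [1,1,0,1,0], [1,1,1,0,0], [1,1,1,1,1]}.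
           card {k. k<4 \<and> [1,1,A i k, B i k, C i k] = \<tau>} = 1"
        using hq rs[OF i] by (intro q1) auto
      show ?thesis using Q[rule_format, OF \<tau>] seq by simp
    qed
  next
    fix \<tau> :: "nat list" and j :: nat assume \<tau>: "\<tau> \<in> {[1,1,0,0,1], [1,1,0,1,0], [1,1,1,0,0], [1,1,1,1,1]}" and j: "j<4"
    have seq: "{i. i < 4 \<and> cell_type ?L F i j = \<tau>} = {i. i<4 \<and> [1,1,A i j, B i j, C i j] = \<tau>}"
      using j unfolding F ct by auto
    then show "card {i. i < 4 \<and> cell_type ?L F i j = \<tau>} = 1"
    proof -
      have hq: "\<forall>k<4. (A k j, B k j, C k j) \<in> {(0,0,1),(0,1,0),(1,0,0),(1,1,1)}" using trip j by blast
      have Q: "\<forall>\<tau>\<in>{[1,1,0,0,1], [1,1,0,1,0], [1,1,1,0,0], [1,1,1,1,1]}.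
           card {k. k<4 \<and> [1,1,A k j, B k j, C k j] = \<tau>} = 1"
        using hq cs[OF j] by (intro q1[of "\<lambda>k. A k j" "\<lambda>k. B k j" "\<lambda>k. C k j"]) auto
      show ?thesis using Q[rule_format, OF \<tau>] seq by simp
    qed
  qed
  have P4: "\<forall>i\<in>{4..<10}. \<forall>j\<in>{4..<10}. cell_type ?L F i j \<in>
        {[0,0,0,0,1], [0,0,0,1,0], [0,0,1,0,0]}"
  proof (intro ballI)
    fix i j :: nat assume "i \<in> {4..<10}" "j \<in> {4..<10}"
    then have ij: "4 \<le> i" "i<10" "4 \<le> j" "j<10" by auto
    have o: "A i j + B i j + C i j = 1" using S4 ij by blast
    have "A i j = 0 \<or> A i j = 1" "B i j = 0 \<or> B i j = 1" "C i j = 0 \<or> C i j = 1" using v01[of i j] ij by auto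
    then have "(A i j, B i j, C i j) \<in> {(0,0,1),(0,1,0),(1,0,0)}" using o by (elim disjE) simp_all
    then show "cell_type ?L F i j \<in> {[0,0,0,0,1], [0,0,0,1,0], [0,0,1,0,0]}"
      unfolding F ct using ij by auto
  qed
  have P5: "\<forall>\<tau>\<in>{[0,0,0,0,1], [0,0,0,1,0], [0,0,1,0,0]}.
        (\<forall>i\<in>{4..<10}. card {j. 4 \<le> j \<and> j < 10 \<and> cell_type ?L F i j = \<tau>} = 2) \<and>
        (\<forall>j\<in>{4..<10}. card {i. 4 \<le> i \<and> i < 10 \<and> cell_type ?L F i j = \<tau>} = 2)"
  proof (intro ballI conjI)
    fix \<tau> :: "nat list" and i :: nat assume \<tau>: "\<tau> \<in> {[0,0,0,0,1], [0,0,0,1,0], [0,0,1,0,0]}" and i: "i \<in> {4..<10}"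
    have seq: "{j. 4 \<le> j \<and> j < 10 \<and> cell_type ?L F i j = \<tau>} = {j. 4 \<le> j \<and> j<10 \<and> [0,0,A i j, B i j, C i j] = \<tau>}"
      using i unfolding F ct by auto
    then show "card {j. 4 \<le> j \<and> j < 10 \<and> cell_type ?L F i j = \<tau>} = 2"
    proof -
      have ii: "4 \<le> i" "i<10" using i by auto
      have Q: "\<forall>\<tau>\<in>{[0,0,0,0,1], [0,0,0,1,0], [0,0,1,0,0]}.
           card {k. 4\<le>k \<and> k<10 \<and> [0,0,A i k, B i k, C i k] = \<tau>} = 2"
        using S4[OF ii] r4[OF ii] by (intro q4) auto
      show ?thesis using Q[rule_format, OF \<tau>] seq by simp
    qed
  next
    fix \<tau> :: "nat list" and j :: nat assume \<tau>: "\<tau> \<in> {[0,0,0,0,1], [0,0,0,1,0], [0,0,1,0,0]}" and j: "j \<in> {4..<10}"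
    have seq: "{i. 4 \<le> i \<and> i < 10 \<and> cell_type ?L F i j = \<tau>} = {i. 4 \<le> i \<and> i<10 \<and> [0,0,A i j, B i j, C i j] = \<tau>}"
      using j unfolding F ct by auto
    then show "card {i. 4 \<le> i \<and> i < 10 \<and> cell_type ?L F i j = \<tau>} = 2"
    proof -
      have jj: "4 \<le> j" "j<10" using j by auto
      have Q: "\<forall>\<tau>\<in>{[0,0,0,0,1], [0,0,0,1,0], [0,0,1,0,0]}.
           card {k. 4\<le>k \<and> k<10 \<and> [0,0,A k j, B k j, C k j] = \<tau>} = 2"
        using S4[OF _ _ jj] c4[OF jj] by (intro q4[of "\<lambda>k. A k j" "\<lambda>k. B k j" "\<lambda>k. C k j"]) auto
      show ?thesis using Q[rule_format, OF \<tau>] seq by simp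
    qed
  qed
  show ?thesis using P1 P2 P3 P4 P5 by blast
qed

end
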